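(* There is an absolute constant $C$ such that for all integers $b\ge 0$ and $p\ge 1$, with $n=2^b$, there is an arithmetic circuit using at most $C\,p\binom{n}{\downarrow p}$ $\oplus$-gates that, for every commutative monoid $(S,\oplus,0)$ and every $f:\binom{[n]}{\downarrow p}\to S$, computes for every $y\in[n]$ the value $e(y)=\bigoplus_{X\in\binom{[n]}{\downarrow p},\ y\notin X} f(X)$. (In particular, taking $f(X)=0$ for $|X|<p$, this solves $(p,1)$-disjoint summation.)
   Context: $\binom{[n]}{\downarrow p}$ is the family of subsets of $[n]=\{1,\dots,n\}$ of size at most $p$, and $\binom{n}{\downarrow p}=\sum_{i=0}^{p}\binom{n}{i}$. An arithmetic circuit consists of input gates (one per $X$, evaluating to $f(X)$), constant gates evaluating to $0$, and binary $\oplus$-gates, with designated output gates (one per $y$); gate count refers to the number of $\oplus$-gates. *)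

theory Defs
  imports Complex_Main
begin

definition binom_down :: "nat \<Rightarrow> nat \<Rightarrow> nat" where
  "binom_down n p = (\<Sum>i\<le>p. n choose i)"

definition down_family :: "nat \<Rightarrow> nat \<Rightarrow> nat set set" where
  "down_family n p = {X. X \<subseteq> {1..n} \<and> card X \<le> p}"

text \<open>Gates of an arithmetic circuit. Gates are listed in topological order;
  a Plus gate refers to two earlier gates by their position in the list.\<close>
datatype gate = Input "nat set" | Const0 | Plus nat nat

fun gate_ok :: "nat \<Rightarrow> nat \<Rightarrow> nat \<Rightarrow> gate \<Rightarrow> bool" where
  "gate_ok n p k (Input X) = (X \<in> down_family n p)"
| "gate_ok n p k Const0 = True"
| "gate_ok n p k (Plus i j) = (i < k \<and> j < k)"

definition wf_circuit :: "nat \<Rightarrow> nat \<Rightarrow> gate list \<Rightarrow> bool" where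
  "wf_circuit n p gs = (\<forall>k < length gs. gate_ok n p k (gs ! k))"

fun is_plus :: "gate \<Rightarrow> bool" where
  "is_plus (Plus i j) = True"
| "is_plus _ = False"

definition plus_count :: "gate list \<Rightarrow> nat" where
  "plus_count gs = length (filter is_plus gs)"

fun gate_val :: "(nat set \<Rightarrow> 'a::comm_monoid_add) \<Rightarrow> 'a list \<Rightarrow> gate \<Rightarrow> 'a" where
  "gate_val f vs (Input X) = f X"
| "gate_val f vs Const0 = 0"
| "gate_val f vs (Plus i j) = vs ! i + vs ! j"

definition circ_vals :: "(nat set \<Rightarrow> 'a::comm_monoid_add) \<Rightarrow> gate list \<Rightarrow> 'a list" where
  "circ_vals f gs = foldl (\<lambda>vs g. vs @ [gate_val f vs g]) [] gs"

end

theory Submission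
  imports Defs
begin


fun sem_g :: "nat set set list \<Rightarrow> gate \<Rightarrow> nat set set" where
  "sem_g vs (Input X) = {X}"
| "sem_g vs Const0 = {}"
| "sem_g vs (Plus i j) = vs ! i \<union> vs ! j"

definition sems :: "gate list \<Rightarrow> nat set set list" where
  "sems gs = foldl (\<lambda>vs g. vs @ [sem_g vs g]) [] gs"

lemma sems_snoc: "sems (gs @ [g]) = sems gs @ [sem_g (sems gs) g]"
  by (simp add: sems_def)
lemma sems_Nil: "sems [] = []" by (simp add: sems_def)
lemma length_sems[simp]: "length (sems gs) = length gs"
  by (induction gs rule: rev_induct) (simp_all add: sems_snoc sems_Nil)

lemma circ_vals_snoc: "circ_vals f (gs @ [g]) = circ_vals f gs @ [gate_val f (circ_vals f gs) g]"
  by (simp add: circ_vals_def)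
lemma circ_vals_Nil: "circ_vals f [] = []" by (simp add: circ_vals_def)
lemma length_circ_vals[simp]: "length (circ_vals f gs) = length gs"
  by (induction gs rule: rev_induct) (simp_all add: circ_vals_snoc circ_vals_Nil)

definition good :: "nat \<Rightarrow> nat \<Rightarrow> gate list \<Rightarrow> bool" where
  "good n p gs = (wf_circuit n p gs \<and>
     (\<forall>k<length gs. \<forall>i j. gs ! k = Plus i j \<longrightarrow> sems gs ! i \<inter> sems gs ! j = {}))"

lemma good_Nil: "good n p []" by (simp add: good_def wf_circuit_def)

lemma good_snoc:
  assumes "good n p gs" "gate_ok n p (length gs) g"
    "\<And>i j. g = Plus i j \<Longrightarrow> sems gs ! i \<inter> sems gs ! j = {}"
  shows "good n p (gs @ [g])"
  unfolding good_def
proof (intro conjI allI impI)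
  show "wf_circuit n p (gs @ [g])"
    using assms(1,2) unfolding good_def wf_circuit_def
    by (auto simp: nth_append less_Suc_eq)
next
  fix k i j assume k: "k < length (gs @ [g])" and e: "(gs @ [g]) ! k = Plus i j"
  show "sems (gs @ [g]) ! i \<inter> sems (gs @ [g]) ! j = {}"
  proof (cases "k < length gs")
    case True
    then have "gs ! k = Plus i j" using e by (simp add: nth_append)
    moreover have "gate_ok n p k (gs ! k)" using assms(1) True by (simp add: good_def wf_circuit_def)
    ultimately have "i < length gs" "j < length gs" using True by auto
    then show ?thesis using assms(1) True \<open>gs ! k = Plus i j\<close>
      by (simp add: sems_snoc nth_append good_def)
  next
    case False
    then have "g = Plus i j" "k = length gs" using k e by (auto simp: nth_append)
    then have "i < length gs" "j < length gs" using assms(2) by auto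
    then show ?thesis using assms(3) \<open>g = Plus i j\<close> by (simp add: sems_snoc nth_append)
  qed
qed

lemma good_snocD:
  assumes "good n p (gs @ [g])"
  shows "good n p gs" "gate_ok n p (length gs) g"
    "\<And>i j. g = Plus i j \<Longrightarrow> sems gs ! i \<inter> sems gs ! j = {}"
proof -
  have wf: "wf_circuit n p (gs @ [g])" using assms by (simp add: good_def)
  show g: "gate_ok n p (length gs) g" using wf unfolding wf_circuit_def
    by (metis length_append_singleton lessI nth_append_length)
  show "good n p gs" unfolding good_def
  proof (intro conjI allI impI)
    show "wf_circuit n p gs" using wf unfolding wf_circuit_def
      by (metis length_append_singleton less_SucI nth_append_left)
  next
    fix k i j assume k: "k < length gs" and e: "gs ! k = Plus i j"
    have "gate_ok n p k (gs ! k)" using wf k unfolding wf_circuit_def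
      by (metis length_append_singleton less_SucI nth_append_left)
    then have "i < length gs" "j < length gs" using e k by auto
    moreover have "sems (gs@[g]) ! i \<inter> sems (gs@[g]) ! j = {}"
    proof -
      have "(gs @ [g]) ! k = Plus i j" using k e by (simp add: nth_append)
      moreover have "k < length (gs @ [g])" using k by simp
      ultimately show ?thesis using assms unfolding good_def by blast
    qed
    ultimately show "sems gs ! i \<inter> sems gs ! j = {}" by (simp add: sems_snoc nth_append)
  qed
  fix i j assume "g = Plus i j"
  then have "i < length gs" "j < length gs" using g by auto
  moreover have "sems (gs@[g]) ! i \<inter> sems (gs@[g]) ! j = {}"
    using assms \<open>g = Plus i j\<close> unfolding good_def
    by (metis length_append_singleton lessI nth_append_length)
  ultimately show "sems gs ! i \<inter> sems gs ! j = {}" by (simp add: sems_snoc nth_append)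
qed

lemma sems_finite: "good n p gs \<Longrightarrow> k < length gs \<Longrightarrow> finite (sems gs ! k)"
proof (induction gs arbitrary: k rule: rev_induct)
  case Nil then show ?case by simp
next
  case (snoc g gs)
  note D = good_snocD[OF snoc.prems(1)]
  show ?case
  proof (cases "k < length gs")
    case True then show ?thesis using snoc D by (simp add: sems_snoc nth_append)
  next
    case False
    then have "k = length gs" using snoc.prems by simp
    then show ?thesis using snoc.IH[OF D(1)] D(2)
      by (cases g) (auto simp: sems_snoc nth_append)
  qed
qed

lemma correct:
  "good n p gs \<Longrightarrow> k < length gs \<Longrightarrow> circ_vals f gs ! k = sum f (sems gs ! k)"
proof (induction gs arbitrary: k rule: rev_induct)
  case Nil then show ?case by simp
next
  case (snoc g gs)
  note D = good_snocD[OF snoc.prems(1)]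
  show ?case
  proof (cases "k < length gs")
    case True then show ?thesis using snoc D by (simp add: sems_snoc circ_vals_snoc nth_append)
  next
    case False
    then have k: "k = length gs" using snoc.prems by simp
    show ?thesis
    proof (cases g)
      case (Plus i j)
      then have ij: "i < length gs" "j < length gs" using D(2) by auto
      have "sum f (sems gs ! i \<union> sems gs ! j) = sum f (sems gs ! i) + sum f (sems gs ! j)"
        by (rule sum.union_disjoint) (use ij sems_finite[OF D(1)] D(3)[OF Plus] in auto)
      then show ?thesis using k Plus ij snoc.IH[OF D(1)]
        by (simp add: sems_snoc circ_vals_snoc nth_append)
    qed (use k in \<open>auto simp: sems_snoc circ_vals_snoc nth_append\<close>)
  qed
qed

lemma plus_count_snoc: "plus_count (gs @ [g]) = plus_count gs + (if is_plus g then 1 else 0)"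
  by (simp add: plus_count_def)

lemma sems_mono: "set (sems gs) \<subseteq> set (sems (gs @ [g]))"
  by (auto simp: sems_snoc)

lemma L3:
  assumes "good n p gs" "finite I" "\<forall>i\<in>I. G i \<in> set (sems gs)"
    "\<forall>i\<in>I. \<forall>j\<in>I. i \<noteq> j \<longrightarrow> G i \<inter> G j = {}"
  shows "\<exists>gs'. good n p gs' \<and> plus_count gs' \<le> plus_count gs + card I \<and>
     set (sems gs) \<subseteq> set (sems gs') \<and> (\<Union>i\<in>I. G i) \<in> set (sems gs')"
  using assms(2,1,3,4)
proof (induction I arbitrary: gs rule: finite_induct)
  case empty
  have "good n p (gs @ [Const0])" by (rule good_snoc) (use empty in auto)
  then show ?case
    by (intro exI[of _ "gs @ [Const0]"]) (auto simp: plus_count_snoc sems_snoc)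
next
  case (insert x I)
  obtain gs1 where g1: "good n p gs1" "plus_count gs1 \<le> plus_count gs + card I"
    "set (sems gs) \<subseteq> set (sems gs1)" "(\<Union>i\<in>I. G i) \<in> set (sems gs1)"
  proof -
    have h1: "\<forall>i\<in>I. G i \<in> set (sems gs)" using insert.prems(2) by blast
    have h2: "\<forall>i\<in>I. \<forall>j\<in>I. i \<noteq> j \<longrightarrow> G i \<inter> G j = {}" using insert.prems(3) by blast
    show ?thesis using insert.IH[OF insert.prems(1) h1 h2] that by blast
  qed
  have "G x \<in> set (sems gs1)" using g1(3) insert.prems(2) by blast
  then obtain a where a: "a < length gs1" "sems gs1 ! a = G x"
    by (auto simp: in_set_conv_nth)
  obtain c where c: "c < length gs1" "sems gs1 ! c = (\<Union>i\<in>I. G i)"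
    using g1(4) by (auto simp: in_set_conv_nth)
  have "\<forall>i\<in>I. G x \<inter> G i = {}" using insert.prems(3) insert.hyps(2) by (metis insertCI)
  then have disj: "G x \<inter> (\<Union>i\<in>I. G i) = {}" by blast
  have ok: "gate_ok n p (length gs1) (Plus a c)" using a(1) c(1) by simp
  have gd: "good n p (gs1 @ [Plus a c])"
    by (rule good_snoc[OF g1(1) ok]) (use a(2) c(2) disj in simp)
  have sv: "sems (gs1 @ [Plus a c]) ! length gs1 = G x \<union> (\<Union>i\<in>I. G i)"
    using a c by (simp add: sems_snoc nth_append)
  have mem: "(\<Union>i\<in>insert x I. G i) \<in> set (sems (gs1 @ [Plus a c]))"
    using sv by (metis UN_insert length_sems lessI length_append_singleton nth_mem)
  have pc: "plus_count (gs1 @ [Plus a c]) \<le> plus_count gs + card (insert x I)"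
    using g1(2) insert.hyps by (simp add: plus_count_snoc)
  have sub: "set (sems gs) \<subseteq> set (sems (gs1 @ [Plus a c]))"
    using g1(3) sems_mono by blast
  show ?case using gd pc sub mem by blast
qed

lemma L4:
  assumes "good n p gs" "finite K"
    "\<forall>k\<in>K. finite (I k) \<and> (\<forall>i\<in>I k. G k i \<in> set (sems gs)) \<and>
        (\<forall>i\<in>I k. \<forall>j\<in>I k. i \<noteq> j \<longrightarrow> G k i \<inter> G k j = {})"
  shows "\<exists>gs'. good n p gs' \<and> plus_count gs' \<le> plus_count gs + (\<Sum>k\<in>K. card (I k)) \<and>
     set (sems gs) \<subseteq> set (sems gs') \<and> (\<forall>k\<in>K. (\<Union>i\<in>I k. G k i) \<in> set (sems gs'))"
  using assms(2,1,3)
proof (induction K arbitrary: gs rule: finite_induct)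
  case empty then show ?case by (intro exI[of _ gs]) simp
next
  case (insert x K)
  have h: "\<forall>k\<in>K. finite (I k) \<and> (\<forall>i\<in>I k. G k i \<in> set (sems gs)) \<and>
        (\<forall>i\<in>I k. \<forall>j\<in>I k. i \<noteq> j \<longrightarrow> G k i \<inter> G k j = {})"
    using insert.prems(2) by blast
  obtain gs1 where g1: "good n p gs1" "plus_count gs1 \<le> plus_count gs + (\<Sum>k\<in>K. card (I k))"
    "set (sems gs) \<subseteq> set (sems gs1)" "\<forall>k\<in>K. (\<Union>i\<in>I k. G k i) \<in> set (sems gs1)"
    using insert.IH[OF insert.prems(1) h] by blast
  have hx: "finite (I x)" "\<forall>i\<in>I x. G x i \<in> set (sems gs1)"
     "\<forall>i\<in>I x. \<forall>j\<in>I x. i \<noteq> j \<longrightarrow> G x i \<inter> G x j = {}"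
    using insert.prems(2) g1(3) by blast+
  obtain gs2 where g2: "good n p gs2" "plus_count gs2 \<le> plus_count gs1 + card (I x)"
    "set (sems gs1) \<subseteq> set (sems gs2)" "(\<Union>i\<in>I x. G x i) \<in> set (sems gs2)"
    using L3[OF g1(1) hx] by blast
  have pc: "plus_count gs2 \<le> plus_count gs + (\<Sum>k\<in>insert x K. card (I k))"
    using g1(2) g2(2) insert.hyps by simp
  have mem: "\<forall>k\<in>insert x K. (\<Union>i\<in>I k. G k i) \<in> set (sems gs2)"
    using g1(4) g2(3) g2(4) by blast
  show ?case using g2(1) pc mem g1(3) g2(3) by blast
qed

lemma L5:
  assumes "good n p gs" "finite A" "A \<subseteq> down_family n p"
  shows "\<exists>gs'. good n p gs' \<and> plus_count gs' \<le> plus_count gs \<and>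
     set (sems gs) \<subseteq> set (sems gs') \<and> (\<forall>X\<in>A. {X} \<in> set (sems gs'))"
  using assms(2,1,3)
proof (induction A arbitrary: gs rule: finite_induct)
  case empty then show ?case by (intro exI[of _ gs]) simp
next
  case (insert x A)
  obtain gs1 where g1: "good n p gs1" "plus_count gs1 \<le> plus_count gs"
    "set (sems gs) \<subseteq> set (sems gs1)" "\<forall>X\<in>A. {X} \<in> set (sems gs1)"
    using insert.IH[OF insert.prems(1)] insert.prems(2) by blast
  have ok: "gate_ok n p (length gs1) (Input x)" using insert.prems(2) by simp
  have gd: "good n p (gs1 @ [Input x])" by (rule good_snoc[OF g1(1) ok]) simp
  have m: "{x} \<in> set (sems (gs1 @ [Input x]))" by (simp add: sems_snoc)
  have pc: "plus_count (gs1 @ [Input x]) \<le> plus_count gs" using g1(2) by (simp add: plus_count_snoc)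
  show ?case using gd pc m g1(3,4) sems_mono[of gs1 "Input x"] by blast
qed




lemma card_down:
  assumes "finite A"
  shows "card {Z. Z \<subseteq> A \<and> card Z \<le> p} = binom_down (card A) p"
proof -
  have eq: "{Z. Z \<subseteq> A \<and> card Z \<le> p} = (\<Union>i\<in>{..p}. {Z. Z \<subseteq> A \<and> card Z = i})" by auto
  have "card (\<Union>i\<in>{..p}. {Z. Z \<subseteq> A \<and> card Z = i}) = (\<Sum>i\<le>p. card {Z. Z \<subseteq> A \<and> card Z = i})"
    by (rule card_UN_disjoint) (use assms in auto)
  also have "\<dots> = (\<Sum>i\<le>p. card A choose i)" using n_subsets[OF assms] by simp
  finally show ?thesis using eq by (simp add: binom_down_def)
qed

lemma split_count:
  assumes "finite C" "finite D" "C \<inter> D = {}"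
  shows "(\<Sum>Z\<in>{Z. Z \<subseteq> C \<and> card Z \<le> p}. card {W. W \<subseteq> D \<and> card (Z \<union> W) \<le> p})
       = card {Y. Y \<subseteq> C \<union> D \<and> card Y \<le> p}"
proof -
  let ?S = "{Z. Z \<subseteq> C \<and> card Z \<le> p}"
  let ?I = "\<lambda>Z. {W. W \<subseteq> D \<and> card (Z \<union> W) \<le> p}"
  have fS: "finite ?S" using assms(1) by simp
  have fI: "\<forall>Z\<in>?S. finite (?I Z)" using assms(2) by simp
  have "(\<Sum>Z\<in>?S. card (?I Z)) = card (SIGMA Z:?S. ?I Z)" using card_SigmaI[OF fS fI] by simp
  also have "\<dots> = card ((\<lambda>(Z,W). Z \<union> W) ` (SIGMA Z:?S. ?I Z))"
  proof (rule card_image[symmetric])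
    show "inj_on (\<lambda>(Z,W). Z \<union> W) (SIGMA Z:?S. ?I Z)"
    proof (rule inj_onI, clarify)
      fix Z1 W1 Z2 W2
      assume "Z1 \<subseteq> C" "W1 \<subseteq> D" "Z2 \<subseteq> C" "W2 \<subseteq> D" "Z1 \<union> W1 = Z2 \<union> W2"
      then show "Z1 = Z2 \<and> W1 = W2" using assms(3) by blast
    qed
  qed
  also have "(\<lambda>(Z,W). Z \<union> W) ` (SIGMA Z:?S. ?I Z) = {Y. Y \<subseteq> C \<union> D \<and> card Y \<le> p}"
  proof (rule set_eqI, rule iffI)
    fix Y assume "Y \<in> (\<lambda>(Z,W). Z \<union> W) ` (SIGMA Z:?S. ?I Z)"
    then show "Y \<in> {Y. Y \<subseteq> C \<union> D \<and> card Y \<le> p}" by auto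
  next
    fix Y assume Y: "Y \<in> {Y. Y \<subseteq> C \<union> D \<and> card Y \<le> p}"
    then have fY: "finite Y" using assms(1,2) finite_subset by blast
    have "card (Y \<inter> C) \<le> card Y" using fY by (intro card_mono) auto
    moreover have "Y \<inter> C \<union> Y \<inter> D = Y" using Y by auto
    ultimately have "(Y \<inter> C, Y \<inter> D) \<in> (SIGMA Z:?S. ?I Z)" using Y by auto
    moreover have "Y = (Y \<inter> C) \<union> (Y \<inter> D)" using Y by auto
    ultimately show "Y \<in> (\<lambda>(Z,W). Z \<union> W) ` (SIGMA Z:?S. ?I Z)"
      by (metis (no_types, lifting) case_prod_conv image_eqI)
  qed
  finally show ?thesis .
qed

lemma choose_le_Suc: "(m choose j) \<le> (Suc m choose j)"
  by (cases j) (simp_all add: binomial_Suc_Suc)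

lemma two_choose: assumes "i \<ge> 2" shows "2 * (h choose i) \<le> h * (h choose (i - 1))"
proof -
  have "2 * (h choose i) \<le> i * (h choose i)" using assms by simp
  also have "\<dots> = h * ((h - 1) choose (i - 1))" using assms by (intro times_binomial_minus1_eq) simp
  also have "\<dots> \<le> h * (h choose (i - 1))"
  proof (cases h)
    case (Suc m)
    have "(m choose (i - 1)) \<le> (Suc m choose (i - 1))" by (rule choose_le_Suc)
    then show ?thesis using Suc by (simp only: diff_Suc_1) (rule mult_le_mono2)
  qed simp
  finally show ?thesis .
qed

lemma four_choose: assumes "i \<ge> 2" shows "4 * (h choose i) \<le> (2 * h) choose i"
proof -
  let ?f = "\<lambda>k. (h choose k) * (h choose (i - k))"
  have "(2*h) choose i = (\<Sum>k\<le>i. ?f k)" using vandermonde[of h h i] by (simp add: mult_2)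
  moreover have "(\<Sum>k\<in>{0,1,i}. ?f k) \<le> (\<Sum>k\<le>i. ?f k)"
    by (rule sum_mono2) (use assms in auto)
  moreover have "(\<Sum>k\<in>{0,1,i}. ?f k) = (h choose i) + h * (h choose (i - 1)) + (h choose i)"
    using assms by simp
  ultimately show ?thesis using two_choose[OF assms, of h] by linarith
qed

lemma bd_double: "4 * binom_down h p \<le> binom_down (2 * h) p + 2 * h + 3"
proof (induction p)
  case 0 then show ?case by (simp add: binom_down_def)
next
  case (Suc p)
  show ?case
  proof (cases p)
    case 0 then show ?thesis by (simp add: binom_down_def)
  next
    case (Suc q)
    have "4 * (h choose Suc p) \<le> (2*h) choose Suc p" using four_choose Suc by simp
    then show ?thesis using Suc.IH by (simp add: binom_down_def)
  qed
qed

definition cost :: "nat \<Rightarrow> nat \<Rightarrow> nat" where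
  "cost p b = (\<Sum>k<b. 2^(k+1) * binom_down (2^(b-k)) p)"

lemma cost_Suc: "cost p (Suc b) = 2 * binom_down (2^(Suc b)) p + 2 * cost p b"
proof -
  have "cost p (Suc b) = 2^(0+1) * binom_down (2^(Suc b - 0)) p
      + (\<Sum>k<b. 2^(Suc k+1) * binom_down (2^(Suc b - Suc k)) p)"
    unfolding cost_def by (rule sum.lessThan_Suc_shift)
  also have "(\<Sum>k<b. 2^(Suc k+1) * binom_down (2^(Suc b - Suc k)) p) = 2 * cost p b"
    unfolding cost_def sum_distrib_left by (rule sum.cong) auto
  finally show ?thesis by simp
qed

lemma cost_bound: "cost p b \<le> 4 * binom_down (2^b) p + 5 * b * 2^b"
proof (induction b)
  case 0 then show ?case by (simp add: cost_def)
next
  case (Suc b)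
  have d: "4 * binom_down (2^b) p \<le> binom_down (2^Suc b) p + 2 * 2^b + 3"
    using bd_double[of "2^b" p] by simp
  have pos: "1 \<le> (2::nat)^b" by simp
  have "cost p (Suc b) = 2 * binom_down (2^(Suc b)) p + 2 * cost p b" by (rule cost_Suc)
  also have "\<dots> \<le> 2 * binom_down (2^(Suc b)) p + 8 * binom_down (2^b) p + 10 * b * 2^b"
    using Suc.IH by simp
  also have "\<dots> \<le> 4 * binom_down (2^(Suc b)) p + 5 * Suc b * 2^Suc b"
  proof -
    have "5 * Suc b * 2^Suc b = 10 * 2^b + 10 * b * 2^b" by (simp add: algebra_simps)
    moreover have "8 * binom_down (2^b) p \<le> 2 * binom_down (2^(Suc b)) p + 10 * 2^b"
      using d pos unfolding power_Suc by linarith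
    ultimately show ?thesis by linarith
  qed
  finally show ?case .
qed

lemma cost_bound2: assumes "p \<ge> 2" shows "cost p b \<le> 14 * binom_down (2^b) p"
proof -
  let ?n = "(2::nat)^b"
  have "?n choose 2 \<le> binom_down ?n p" unfolding binom_down_def
    using assms by (intro member_le_sum) auto
  moreover have "2 * (?n choose 2) = ?n * (?n - 1)"
    using times_binomial_minus1_eq[of 2 ?n] by simp
  moreover have "b \<le> ?n - 1" using less_exp[of b] by arith
  then have "b * ?n \<le> ?n * (?n - 1)" by simp
  ultimately have "b * ?n \<le> 2 * binom_down ?n p" by linarith
  then show ?thesis using cost_bound[of p b] by simp
qed




definition blk :: "nat \<Rightarrow> nat \<Rightarrow> nat \<Rightarrow> nat set" where
  "blk b l j = {j * 2^(b-l) + 1 .. (j+1) * 2^(b-l)}"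

definition GG :: "nat \<Rightarrow> nat \<Rightarrow> nat set \<Rightarrow> nat set \<Rightarrow> nat set set" where
  "GG n p B Z = {X \<in> down_family n p. X \<inter> B = Z}"

lemma finite_down: "finite (down_family n p)"
proof -
  have "down_family n p \<subseteq> Pow {1..n}" by (auto simp: down_family_def)
  then show ?thesis by (rule finite_subset) simp
qed

lemma card_blk: "card (blk b l j) = 2^(b-l)"
  by (simp add: blk_def)

lemma finite_blk: "finite (blk b l j)" by (simp add: blk_def)

lemma blk_sub: assumes "l < b" shows "blk b (Suc l) j \<subseteq> blk b l (j div 2)"
proof -
  obtain m :: nat where m: "2^(b-l) = 2 * m" "2^(b - Suc l) = m"
    using assms by (metis Suc_diff_Suc power_Suc)
  have j: "2 * (j div 2) \<le> j" "j + 1 \<le> 2 * (j div 2) + 2" by auto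
  have "j div 2 * (2*m) \<le> j * m" using mult_le_mono1[OF j(1), of m] by (simp add: ac_simps)
  moreover have "(j + 1) * m \<le> (j div 2 + 1) * (2*m)" using mult_le_mono1[OF j(2), of m]
    by (simp add: algebra_simps)
  ultimately show ?thesis unfolding blk_def m by auto
qed

lemma blk_sub_top: assumes "l \<le> b" "j < 2^l" shows "blk b l j \<subseteq> {1..2^b}"
proof -
  have "(j+1) * 2^(b-l) \<le> 2^l * 2^(b-l)" using assms(2) by (intro mult_le_mono1) simp
  also have "\<dots> = 2^b" using assms(1) by (simp add: power_add[symmetric])
  finally show ?thesis unfolding blk_def by auto
qed

lemma blk0: "blk b 0 0 = {1..2^b}" by (simp add: blk_def)
lemma blk_last: "blk b b j = {j+1}" by (simp add: blk_def)

lemma down_card: "X \<in> down_family n p \<Longrightarrow> finite X \<and> card X \<le> p"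
  unfolding down_family_def using finite_subset by auto

lemma gg_split:
  assumes "C \<subseteq> P" "Z \<subseteq> C"
  shows "GG n p C Z = (\<Union>W\<in>{W. W \<subseteq> P - C \<and> card (Z \<union> W) \<le> p}. GG n p P (Z \<union> W))"
proof (rule set_eqI, rule iffI)
  fix X assume X: "X \<in> GG n p C Z"
  then have F: "X \<in> down_family n p" "X \<inter> C = Z" by (auto simp: GG_def)
  have "X \<inter> P = Z \<union> X \<inter> (P - C)" using F(2) assms by auto
  moreover have "card (X \<inter> P) \<le> p" using down_card[OF F(1)] card_mono[of X "X \<inter> P"]
    by (meson inf_le1 le_trans)
  ultimately show "X \<in> (\<Union>W\<in>{W. W \<subseteq> P - C \<and> card (Z \<union> W) \<le> p}. GG n p P (Z \<union> W))"
    using F by (auto simp: GG_def intro!: bexI[of _ "X \<inter> (P - C)"])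
next
  fix X assume "X \<in> (\<Union>W\<in>{W. W \<subseteq> P - C \<and> card (Z \<union> W) \<le> p}. GG n p P (Z \<union> W))"
  then obtain W where W: "W \<subseteq> P - C" "X \<in> down_family n p" "X \<inter> P = Z \<union> W"
    by (auto simp: GG_def)
  have "X \<inter> C = (X \<inter> P) \<inter> C" using assms by auto
  also have "\<dots> = Z" using W(1,3) assms by auto
  finally show "X \<in> GG n p C Z" using W by (simp add: GG_def)
qed

lemma gg_disj:
  assumes "Z \<subseteq> C" "W1 \<subseteq> P - C" "W2 \<subseteq> P - C" "W1 \<noteq> W2"
  shows "GG n p P (Z \<union> W1) \<inter> GG n p P (Z \<union> W2) = {}"
proof -
  have "Z \<union> W1 \<noteq> Z \<union> W2" using assms by blast
  then show ?thesis by (auto simp: GG_def)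
qed

lemma level:
  assumes "l \<le> b"
  shows "\<exists>gs. good (2^b) p gs \<and> plus_count gs \<le> (\<Sum>k<l. 2^(k+1) * binom_down (2^(b-k)) p) \<and>
     (\<forall>j<2^l. \<forall>Z. Z \<subseteq> blk b l j \<and> card Z \<le> p \<longrightarrow> GG (2^b) p (blk b l j) Z \<in> set (sems gs))"
  using assms
proof (induction l)
  case 0
  obtain gs where gs: "good (2^b) p gs" "plus_count gs \<le> plus_count []"
    "\<forall>X\<in>down_family (2^b) p. {X} \<in> set (sems gs)"
    using L5[OF good_Nil finite_down subset_refl] by blast
  have "\<forall>Z. Z \<subseteq> blk b 0 0 \<and> card Z \<le> p \<longrightarrow> GG (2^b) p (blk b 0 0) Z \<in> set (sems gs)"
  proof (intro allI impI)
    fix Z assume Z: "Z \<subseteq> blk b 0 0 \<and> card Z \<le> p"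
    then have ZF: "Z \<in> down_family (2^b) p" by (simp add: blk0 down_family_def)
    have "GG (2^b) p (blk b 0 0) Z = {Z}"
      using ZF unfolding GG_def blk0 down_family_def by auto
    then show "GG (2^b) p (blk b 0 0) Z \<in> set (sems gs)" using gs(3) ZF by simp
  qed
  then show ?case using gs by (intro exI[of _ gs]) (simp add: plus_count_def)
next
  case (Suc l)
  then have lb: "l < b" by simp
  obtain gs where gs: "good (2^b) p gs" "plus_count gs \<le> (\<Sum>k<l. 2^(k+1) * binom_down (2^(b-k)) p)"
    "\<forall>j<2^l. \<forall>Z. Z \<subseteq> blk b l j \<and> card Z \<le> p \<longrightarrow> GG (2^b) p (blk b l j) Z \<in> set (sems gs)"
    using Suc.IH lb by auto
  define C where "C j = blk b (Suc l) j" for j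
  define P where "P j = blk b l (j div 2)" for j
  define K where "K = (SIGMA j:{..<2^Suc l}. {Z. Z \<subseteq> C j \<and> card Z \<le> p})"
  define I where "I = (\<lambda>(j,Z). {W. W \<subseteq> P j - C j \<and> card (Z \<union> W) \<le> p})"
  define G where "G = (\<lambda>(j,Z) W. GG (2^b) p (P j) (Z \<union> W))"
  have CP: "C j \<subseteq> P j" for j unfolding C_def P_def by (rule blk_sub[OF lb])
  have fC: "finite (C j)" "finite (P j)" for j unfolding C_def P_def by (simp_all add: finite_blk)
  have fK: "finite K" unfolding K_def using fC by simp
  have cond: "\<forall>k\<in>K. finite (I k) \<and> (\<forall>i\<in>I k. G k i \<in> set (sems gs)) \<and>
        (\<forall>i\<in>I k. \<forall>i'\<in>I k. i \<noteq> i' \<longrightarrow> G k i \<inter> G k i' = {})"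
  proof
    fix k assume k: "k \<in> K"
    obtain j Z where jZ: "k = (j, Z)" "j < 2^Suc l" "Z \<subseteq> C j" "card Z \<le> p"
      using k unfolding K_def by auto
    have "finite (I k)" unfolding jZ I_def using fC by simp
    moreover have "\<forall>i\<in>I k. G k i \<in> set (sems gs)"
    proof
      fix W assume "W \<in> I k"
      then have W: "W \<subseteq> P j - C j" "card (Z \<union> W) \<le> p" unfolding jZ I_def by auto
      have "j div 2 < 2^l" using jZ(2) by simp
      moreover have "Z \<union> W \<subseteq> blk b l (j div 2)" using W jZ(3) CP[of j] unfolding P_def by auto
      ultimately show "G k W \<in> set (sems gs)" using gs(3) W(2) unfolding jZ G_def P_def by auto
    qed
    moreover have "\<forall>i\<in>I k. \<forall>i'\<in>I k. i \<noteq> i' \<longrightarrow> G k i \<inter> G k i' = {}"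
      unfolding jZ I_def G_def using gg_disj[OF jZ(3)] by auto
    ultimately show "finite (I k) \<and> (\<forall>i\<in>I k. G k i \<in> set (sems gs)) \<and>
        (\<forall>i\<in>I k. \<forall>i'\<in>I k. i \<noteq> i' \<longrightarrow> G k i \<inter> G k i' = {})" by blast
  qed
  obtain gs' where gs': "good (2^b) p gs'" "plus_count gs' \<le> plus_count gs + (\<Sum>k\<in>K. card (I k))"
    "\<forall>k\<in>K. (\<Union>i\<in>I k. G k i) \<in> set (sems gs')"
    using L4[OF gs(1) fK cond] by blast
  have sumK: "(\<Sum>k\<in>K. card (I k)) = 2^(Suc l) * binom_down (2^(b-l)) p"
  proof -
    have e1: "(\<Sum>j<2^Suc l. \<Sum>Z\<in>{Z. Z \<subseteq> C j \<and> card Z \<le> p}. card (I (j,Z))) = (\<Sum>(j,Z)\<in>K. card (I (j,Z)))"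
      unfolding K_def by (rule sum.Sigma) (use fC in auto)
    have e2: "(\<Sum>(j,Z)\<in>K. card (I (j,Z))) = (\<Sum>k\<in>K. card (I k))"
      by (simp add: case_prod_unfold)
    have "(\<Sum>k\<in>K. card (I k)) = (\<Sum>j<2^Suc l. \<Sum>Z\<in>{Z. Z \<subseteq> C j \<and> card Z \<le> p}. card (I (j,Z)))"
      using e1 e2 by simp
    also have "\<dots> = (\<Sum>j<(2::nat)^Suc l. binom_down (2^(b-l)) p)"
    proof (rule sum.cong[OF refl])
      fix j
      have "(\<Sum>Z\<in>{Z. Z \<subseteq> C j \<and> card Z \<le> p}. card (I (j,Z)))
          = card {Y. Y \<subseteq> C j \<union> (P j - C j) \<and> card Y \<le> p}"
        unfolding I_def using split_count[of "C j" "P j - C j" p] fC by auto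
      also have "C j \<union> (P j - C j) = P j" using CP by auto
      finally show "(\<Sum>Z\<in>{Z. Z \<subseteq> C j \<and> card Z \<le> p}. card (I (j,Z))) = binom_down (2^(b-l)) p"
        using card_down[OF fC(2)] by (simp add: P_def card_blk)
    qed
    finally show ?thesis by simp
  qed
  have "plus_count gs' \<le> (\<Sum>k<Suc l. 2^(k+1) * binom_down (2^(b-k)) p)"
    using gs(2) gs'(2) sumK by simp
  moreover have "\<forall>j<2^Suc l. \<forall>Z. Z \<subseteq> blk b (Suc l) j \<and> card Z \<le> p \<longrightarrow>
      GG (2^b) p (blk b (Suc l) j) Z \<in> set (sems gs')"
  proof (intro allI impI)
    fix j Z assume j: "j < 2^Suc l" and Z: "Z \<subseteq> blk b (Suc l) j \<and> card Z \<le> p"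
    then have "(j,Z) \<in> K" unfolding K_def C_def by auto
    then have "(\<Union>i\<in>I (j,Z). G (j,Z) i) \<in> set (sems gs')" using gs'(3) by blast
    moreover have "(\<Union>i\<in>I (j,Z). G (j,Z) i) = GG (2^b) p (blk b (Suc l) j) Z"
    proof -
      have "Z \<subseteq> C j" using Z by (simp add: C_def)
      from gg_split[OF CP[of j] this, where n="2^b" and p=p]
      show ?thesis unfolding I_def G_def by (simp add: C_def)
    qed
    ultimately show "GG (2^b) p (blk b (Suc l) j) Z \<in> set (sems gs')" by simp
  qed
  ultimately show ?case using gs'(1) by blast
qed




lemma U2:
  assumes "good n p gs" "A \<in> set (sems gs)" "B \<in> set (sems gs)" "A \<inter> B = {}"
  shows "\<exists>gs'. good n p gs' \<and> plus_count gs' \<le> plus_count gs + 2 \<and>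
     set (sems gs) \<subseteq> set (sems gs') \<and> A \<union> B \<in> set (sems gs')"
proof -
  let ?G = "\<lambda>i::nat. if i = 0 then A else B"
  have c: "\<forall>i\<in>{0,1}. ?G i \<in> set (sems gs)" "\<forall>i\<in>{0,1}. \<forall>j\<in>{0,1}. i \<noteq> j \<longrightarrow> ?G i \<inter> ?G j = {}"
    using assms by auto
  have u: "(\<Union>i\<in>{0::nat,1}. ?G i) = A \<union> B" by auto
  show ?thesis using L3[OF assms(1) _ c] u by simp
qed

lemma chain:
  assumes "good n p gs0" "\<forall>k<m. {{a k}} \<in> set (sems gs0)" "S 0 = {}"
    "\<forall>k<m. S (Suc k) = S k \<union> {{a k}} \<and> {a k} \<notin> S k"
  shows "\<exists>gs. good n p gs \<and> plus_count gs \<le> plus_count gs0 + 2*m \<and>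
     set (sems gs0) \<subseteq> set (sems gs) \<and> (\<forall>i\<le>m. S i \<in> set (sems gs))"
  using assms(2,4)
proof (induction m)
  case 0
  have "\<exists>gs'. good n p gs' \<and> plus_count gs' \<le> plus_count gs0 + card ({}::nat set) \<and>
     set (sems gs0) \<subseteq> set (sems gs') \<and> (\<Union>i\<in>{}. (\<lambda>_::nat. {}) i) \<in> set (sems gs')"
    by (rule L3[OF assms(1)]) auto
  then show ?case using assms(3) by auto
next
  case (Suc m)
  obtain gs1 where g1: "good n p gs1" "plus_count gs1 \<le> plus_count gs0 + 2*m"
    "set (sems gs0) \<subseteq> set (sems gs1)" "\<forall>i\<le>m. S i \<in> set (sems gs1)"
    using Suc.IH Suc.prems by (meson less_SucI)
  have "S m \<in> set (sems gs1)" "{{a m}} \<in> set (sems gs1)" "S m \<inter> {{a m}} = {}"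
    using g1 Suc.prems by auto
  then obtain gs2 where g2: "good n p gs2" "plus_count gs2 \<le> plus_count gs1 + 2"
    "set (sems gs1) \<subseteq> set (sems gs2)" "S m \<union> {{a m}} \<in> set (sems gs2)"
    using U2[OF g1(1)] by blast
  have "\<forall>i\<le>Suc m. S i \<in> set (sems gs2)"
  proof (intro allI impI)
    fix i assume "i \<le> Suc m"
    then consider "i \<le> m" | "i = Suc m" by linarith
    then show "S i \<in> set (sems gs2)"
    proof cases
      case 1 then show ?thesis using g1(4) g2(3) by blast
    next
      case 2 then show ?thesis using g2(4) Suc.prems(2) by simp
    qed
  qed
  then show ?case using g1 g2 by (intro exI[of _ gs2]) auto
qed

lemma down1: "down_family n 1 = insert {} ((\<lambda>x. {x}) ` {1..n})"
proof (rule set_eqI, rule iffI)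
  fix X assume X: "X \<in> down_family n 1"
  have f: "finite X" "card X \<le> 1" using down_card[OF X] by simp_all
  have s: "X \<subseteq> {1..n}" using X by (simp add: down_family_def)
  show "X \<in> insert {} ((\<lambda>x. {x}) ` {1..n})"
  proof (cases "X = {}")
    case False
    then obtain x where x: "x \<in> X" by blast
    have "\<forall>a\<in>X. \<forall>b\<in>X. a = b" using f card_le_Suc0_iff_eq[OF f(1)] by simp
    then have "X = {x}" using x by blast
    then show ?thesis using s by auto
  qed simp
next
  fix X assume "X \<in> insert {} ((\<lambda>x. {x}) ` {1..n})"
  then show "X \<in> down_family n 1" by (auto simp: down_family_def)
qed

lemma p1:
  "\<exists>gs. good n 1 gs \<and> plus_count gs \<le> 7 * n \<and>
     (\<forall>y\<in>{1..n}. {X \<in> down_family n 1. y \<notin> X} \<in> set (sems gs))"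
proof -
  let ?s = "\<lambda>x::nat. {x}"
  obtain gs0 where g0: "good n 1 gs0" "plus_count gs0 \<le> plus_count []"
    "\<forall>X\<in>down_family n 1. {X} \<in> set (sems gs0)"
    using L5[OF good_Nil finite_down subset_refl] by blast
  have pc0: "plus_count gs0 = 0" using g0(2) by (simp add: plus_count_def)
  have g0s: "\<forall>x\<in>{1..n}. {{x}} \<in> set (sems gs0)" "{{}} \<in> set (sems gs0)"
    using g0(3) unfolding down1 by auto
  define S1 where "S1 k = ?s ` {1..k}" for k
  obtain gs1 where g1: "good n 1 gs1" "plus_count gs1 \<le> plus_count gs0 + 2*n"
    "set (sems gs0) \<subseteq> set (sems gs1)" "\<forall>i\<le>n. S1 i \<in> set (sems gs1)"
  proof (rule chain[OF g0(1), of n "\<lambda>k. Suc k" S1, THEN exE])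
    show "\<forall>k<n. {{Suc k}} \<in> set (sems gs0)" using g0s(1) by auto
    show "S1 0 = {}" by (simp add: S1_def)
    show "\<forall>k<n. S1 (Suc k) = S1 k \<union> {{Suc k}} \<and> {Suc k} \<notin> S1 k"
      by (auto simp: S1_def atLeastAtMostSuc_conv)
  qed blast
  define S2 where "S2 t = ?s ` {n - t + 1..n}" for t
  obtain gs2 where g2: "good n 1 gs2" "plus_count gs2 \<le> plus_count gs1 + 2*n"
    "set (sems gs1) \<subseteq> set (sems gs2)" "\<forall>i\<le>n. S2 i \<in> set (sems gs2)"
  proof (rule chain[OF g1(1), of n "\<lambda>t. n - t" S2, THEN exE])
    show "\<forall>k<n. {{n - k}} \<in> set (sems gs1)" using g0s(1) g1(3) by auto
    show "S2 0 = {}" by (simp add: S2_def)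
    show "\<forall>k<n. S2 (Suc k) = S2 k \<union> {{n - k}} \<and> {n - k} \<notin> S2 k"
    proof (intro allI impI conjI)
      fix k assume k: "k < n"
      have "{n - Suc k + 1..n} = insert (n - k) {n - k + 1..n}" using k by auto
      then show "S2 (Suc k) = S2 k \<union> {{n - k}}" by (auto simp: S2_def)
      show "{n - k} \<notin> S2 k" by (auto simp: S2_def)
    qed
  qed blast
  define K where "K = {1..n}"
  define I where "I = (\<lambda>y::nat. {0::nat,1,2})"
  define G where "G = (\<lambda>y i. if i = (0::nat) then {{}} else if i = 1 then S1 (y - 1) else S2 (n - y))"
  have cond: "\<forall>k\<in>K. finite (I k) \<and> (\<forall>i\<in>I k. G k i \<in> set (sems gs2)) \<and>
        (\<forall>i\<in>I k. \<forall>j\<in>I k. i \<noteq> j \<longrightarrow> G k i \<inter> G k j = {})"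
  proof
    fix y assume y: "y \<in> K"
    have "{{}} \<in> set (sems gs2)" using g0s(2) g1(3) g2(3) by auto
    moreover have "S1 (y - 1) \<in> set (sems gs2)" using g1(4) g2(3) y by (auto simp: K_def)
    moreover have "S2 (n - y) \<in> set (sems gs2)" using g2(4) by auto
    moreover have "S1 (y - 1) \<inter> S2 (n - y) = {}" using y by (auto simp: S1_def S2_def K_def)
    moreover have "{{}} \<inter> S1 (y - 1) = {}" "{{}} \<inter> S2 (n - y) = {}" by (auto simp: S1_def S2_def)
    ultimately show "finite (I y) \<and> (\<forall>i\<in>I y. G y i \<in> set (sems gs2)) \<and>
        (\<forall>i\<in>I y. \<forall>j\<in>I y. i \<noteq> j \<longrightarrow> G y i \<inter> G y j = {})"
      unfolding I_def G_def by auto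
  qed
  obtain gs3 where g3: "good n 1 gs3" "plus_count gs3 \<le> plus_count gs2 + (\<Sum>k\<in>K. card (I k))"
    "\<forall>k\<in>K. (\<Union>i\<in>I k. G k i) \<in> set (sems gs3)"
    using L4[OF g2(1) _ cond] by (auto simp: K_def)
  have "(\<Sum>k\<in>K. card (I k)) = 3 * n" by (simp add: I_def K_def)
  then have pc: "plus_count gs3 \<le> 7 * n" using g3(2) g2(2) g1(2) pc0 by linarith
  have "\<forall>y\<in>{1..n}. {X \<in> down_family n 1. y \<notin> X} \<in> set (sems gs3)"
  proof
    fix y assume y: "y \<in> {1..n}"
    have "(\<Union>i\<in>I y. G y i) = {{}} \<union> S1 (y - 1) \<union> S2 (n - y)"
      unfolding I_def G_def by auto
    also have "\<dots> = {X \<in> down_family n 1. y \<notin> X}"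
    proof -
      have e1: "{n - (n - y) + 1..n} = {y+1..n}" using y by auto
      have e2: "{1..n} - {y} = {1..y-1} \<union> {y+1..n}" using y by auto
      have e3: "{X \<in> insert {} (?s ` {1..n}). y \<notin> X} = insert {} (?s ` ({1..n} - {y}))"
        by auto
      show ?thesis unfolding down1 e3 e2 S1_def S2_def e1 image_Un by auto
    qed
    finally show "{X \<in> down_family n 1. y \<notin> X} \<in> set (sems gs3)" using g3(3) y K_def by metis
  qed
  then show ?thesis using g3(1) pc by blast
qed




lemma exists_good:
  assumes "p \<ge> 1"
  shows "\<exists>gs. good (2^b) p gs \<and> plus_count gs \<le> 14 * binom_down (2^b) p \<and>
     (\<forall>y\<in>{1..2^b}. {X \<in> down_family (2^b) p. y \<notin> X} \<in> set (sems gs))"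
proof (cases "p = 1")
  case True
  obtain gs where gs: "good (2^b) 1 gs" "plus_count gs \<le> 7 * 2^b"
     "\<forall>y\<in>{1..2^b}. {X \<in> down_family (2^b) 1. y \<notin> X} \<in> set (sems gs)"
    using p1 by blast
  have "binom_down (2^b) 1 = 2^b + 1" by (simp add: binom_down_def)
  then have "plus_count gs \<le> 14 * binom_down (2^b) 1" using gs(2) by simp
  then show ?thesis using gs True by blast
next
  case False
  then have p2: "p \<ge> 2" using assms by simp
  obtain gs where gs: "good (2^b) p gs" "plus_count gs \<le> (\<Sum>k<b. 2^(k+1) * binom_down (2^(b-k)) p)"
    "\<forall>j<2^b. \<forall>Z. Z \<subseteq> blk b b j \<and> card Z \<le> p \<longrightarrow> GG (2^b) p (blk b b j) Z \<in> set (sems gs)"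
    using level[of b b p] by blast
  have "plus_count gs \<le> 14 * binom_down (2^b) p"
    using gs(2) cost_bound2[OF p2, of b] unfolding cost_def by linarith
  moreover have "\<forall>y\<in>{1..2^b}. {X \<in> down_family (2^b) p. y \<notin> X} \<in> set (sems gs)"
  proof
    fix y :: nat assume y: "y \<in> {1..2^b}"
    then have j: "y - 1 < 2^b" by auto
    have "blk b b (y - 1) = {y}" using y by (simp add: blk_last)
    then have "GG (2^b) p {y} {} \<in> set (sems gs)" using gs(3) j by fastforce
    moreover have "GG (2^b) p {y} {} = {X \<in> down_family (2^b) p. y \<notin> X}"
      by (auto simp: GG_def)
    ultimately show "{X \<in> down_family (2^b) p. y \<notin> X} \<in> set (sems gs)" by simp
  qed
  ultimately show ?thesis using gs(1) by blast
qed

theorem mainTheorem8: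
  shows "\<exists>C::real. \<forall>b p::nat. p \<ge> 1 \<longrightarrow>
    (\<exists>(gs::gate list) (out::nat \<Rightarrow> nat).
       wf_circuit (2^b) p gs \<and>
       (\<forall>y\<in>{1..2^b}. out y < length gs) \<and>
       real (plus_count gs) \<le> C * real p * real (binom_down (2^b) p) \<and>
       (\<forall>(f::nat set \<Rightarrow> 'a::comm_monoid_add). \<forall>y\<in>{1..2^b}.
          circ_vals f gs ! out y = (\<Sum>X\<in>{X \<in> down_family (2^b) p. y \<notin> X}. f X)))"
proof (intro exI[of _ 14] allI impI)
  fix b p :: nat assume p: "p \<ge> 1"
  obtain gs where gs: "good (2^b) p gs" "plus_count gs \<le> 14 * binom_down (2^b) p"
     "\<forall>y\<in>{1..2^b}. {X \<in> down_family (2^b) p. y \<notin> X} \<in> set (sems gs)"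
    using exists_good[OF p] by blast
  define T where "T y = {X \<in> down_family (2^b) p. y \<notin> X}" for y
  define out where "out y = (SOME k. k < length gs \<and> sems gs ! k = T y)" for y
  have ex: "\<exists>k. k < length gs \<and> sems gs ! k = T y" if "y \<in> {1..2^b}" for y
  proof -
    have "T y \<in> set (sems gs)" using gs(3) that by (simp add: T_def)
    then have "\<exists>k. k < length (sems gs) \<and> sems gs ! k = T y" by (simp only: in_set_conv_nth)
    then show "\<exists>k. k < length gs \<and> sems gs ! k = T y" by simp
  qed
  have out: "out y < length gs \<and> sems gs ! out y = T y" if "y \<in> {1..2^b}" for y
  proof -
    have "\<exists>k. k < length gs \<and> sems gs ! k = T y" using ex that by blast
    then show ?thesis unfolding out_def by (rule someI_ex)
  qed
  have wf: "wf_circuit (2^b) p gs" using gs(1) by (simp add: good_def)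
  have "real (plus_count gs) \<le> 14 * real (binom_down (2^b) p)" using gs(2) by linarith
  also have "\<dots> \<le> 14 * real p * real (binom_down (2^b) p)"
  proof -
    have "1 \<le> real p" using p by simp
    from mult_right_mono[OF this, of "14 * real (binom_down (2^b) p)"]
    show ?thesis by (simp add: ac_simps)
  qed
  finally have pc: "real (plus_count gs) \<le> 14 * real p * real (binom_down (2^b) p)" .
  have val: "\<forall>(f::nat set \<Rightarrow> 'a::comm_monoid_add). \<forall>y\<in>{1..2^b}.
          circ_vals f gs ! out y = (\<Sum>X\<in>{X \<in> down_family (2^b) p. y \<notin> X}. f X)"
  proof (intro allI ballI)
    fix f :: "nat set \<Rightarrow> 'a" and y :: nat assume y: "y \<in> {1..2^b}"
    show "circ_vals f gs ! out y = (\<Sum>X\<in>{X \<in> down_family (2^b) p. y \<notin> X}. f X)"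
    proof -
      have o: "out y < length gs" "sems gs ! out y = T y" using out[OF y] by simp_all
      have "circ_vals f gs ! out y = sum f (sems gs ! out y)" by (rule correct[OF gs(1) o(1)])
      then show ?thesis unfolding o(2) T_def .
    qed
  qed
  show "\<exists>(gs::gate list) (out::nat \<Rightarrow> nat).
       wf_circuit (2^b) p gs \<and>
       (\<forall>y\<in>{1..2^b}. out y < length gs) \<and>
       real (plus_count gs) \<le> 14 * real p * real (binom_down (2^b) p) \<and>
       (\<forall>(f::nat set \<Rightarrow> 'a::comm_monoid_add). \<forall>y\<in>{1..2^b}.
          circ_vals f gs ! out y = (\<Sum>X\<in>{X \<in> down_family (2^b) p. y \<notin> X}. f X))"
    using wf out pc val by blast
qed


end
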